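(* Let $d=(d_1,\ldots,d_n)$ be a tree degree sequence with $n\geq 3$ (so $d_1\geq\cdots\geq d_n$), and let $\nu$ be an integer. There is a tree $T$ with degree sequence $d$ and $\nu(T)=\nu$ if and only if $$\min\Big\{ k\in \mathbb{N}:\sum_{i=1}^k d_i\geq n-1\Big\}\;\leq\; \nu\;\leq\; \min\left\{ \left\lfloor \frac{n}{2}\right\rfloor,\; n-n_1(d)\right\}.$$
   Context: All graphs are finite, simple and undirected. The degree sequence of a graph is the nonincreasing sequence of its vertex degrees. A tree degree sequence is the degree sequence of some tree. $n_1(d)$ is the number of elements of $d$ equal to $1$. $\nu(T)$ denotes the matching number of $T$. *)

theory Defs
  imports Main
begin

definition simple_graph :: "'a set \<Rightarrow> 'a set set \<Rightarrow> bool" where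
  "simple_graph V E \<longleftrightarrow> finite V \<and>
     (\<forall>e\<in>E. \<exists>u v. e = {u, v} \<and> u \<noteq> v \<and> u \<in> V \<and> v \<in> V)"

definition adj :: "'a set set \<Rightarrow> 'a \<Rightarrow> 'a \<Rightarrow> bool" where
  "adj E u v \<longleftrightarrow> {u, v} \<in> E \<and> u \<noteq> v"

definition connected_graph :: "'a set \<Rightarrow> 'a set set \<Rightarrow> bool" where
  "connected_graph V E \<longleftrightarrow> V \<noteq> {} \<and> (\<forall>u\<in>V. \<forall>v\<in>V. (adj E)\<^sup>*\<^sup>* u v)"

definition is_cycle :: "'a set set \<Rightarrow> 'a list \<Rightarrow> bool" where
  "is_cycle E c \<longleftrightarrow> length c \<ge> 3 \<and> distinct c \<and>
     (\<forall>i. Suc i < length c \<longrightarrow> adj E (c ! i) (c ! Suc i)) \<and>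
     adj E (last c) (hd c)"

definition acyclic_graph :: "'a set set \<Rightarrow> bool" where
  "acyclic_graph E \<longleftrightarrow> \<not> (\<exists>c. is_cycle E c)"

definition is_tree :: "'a set \<Rightarrow> 'a set set \<Rightarrow> bool" where
  "is_tree V E \<longleftrightarrow> simple_graph V E \<and> connected_graph V E \<and> acyclic_graph E"

definition degree :: "'a set set \<Rightarrow> 'a \<Rightarrow> nat" where
  "degree E v = card {e \<in> E. v \<in> e}"

definition degree_sequence :: "nat \<Rightarrow> nat set set \<Rightarrow> nat list" where
  "degree_sequence n E = rev (sort (map (degree E) [0..<n]))"

definition tree_degree_sequence :: "nat list \<Rightarrow> bool" where
  "tree_degree_sequence d \<longleftrightarrow>
     (\<exists>E. is_tree {0..<length d} E \<and> degree_sequence (length d) E = d)"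

definition is_matching :: "'a set set \<Rightarrow> 'a set set \<Rightarrow> bool" where
  "is_matching E M \<longleftrightarrow> M \<subseteq> E \<and> (\<forall>e\<in>M. \<forall>f\<in>M. e \<noteq> f \<longrightarrow> e \<inter> f = {})"

definition matching_number :: "'a set set \<Rightarrow> nat" where
  "matching_number E = Max {card M | M. is_matching E M}"

definition n1 :: "nat list \<Rightarrow> nat" where
  "n1 d = length (filter (\<lambda>x. x = 1) d)"

end

theory Submission
  imports Defs "HOL-Library.Multiset"
begin

lemma sg_edge: "simple_graph V E \<Longrightarrow> e \<in> E \<Longrightarrow> e \<subseteq> V"
  unfolding simple_graph_def by force

lemma sg_edge2: "simple_graph V E \<Longrightarrow> e \<in> E \<Longrightarrow> \<exists>a b. e = {a,b} \<and> a \<noteq> b \<and> a \<in> V \<and> b \<in> V"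
  unfolding simple_graph_def by simp

lemma sg_finE: "simple_graph V E \<Longrightarrow> finite E"
proof -
  assume a: "simple_graph V E"
  have "E \<subseteq> Pow V" using sg_edge[OF a] by blast
  moreover have "finite V" using a simple_graph_def by blast
  ultimately show ?thesis using finite_subset[of E "Pow V"] by simp
qed

lemma adj_mono: "E \<subseteq> E' \<Longrightarrow> adj E u v \<Longrightarrow> adj E' u v"
  unfolding adj_def by blast

lemma adj_sym: "adj E u v \<Longrightarrow> adj E v u"
  unfolding adj_def by (auto simp: insert_commute)

lemma acyclic_subset: "acyclic_graph E' \<Longrightarrow> E \<subseteq> E' \<Longrightarrow> acyclic_graph E"
  unfolding acyclic_graph_def is_cycle_def using adj_mono by metis

lemma tree_single: "is_tree {s} {}"
  unfolding is_tree_def simple_graph_def connected_graph_def acyclic_graph_def is_cycle_def adj_def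
  by auto

lemma add_leaf:
  assumes T: "is_tree V E" and u: "u \<in> V" and v: "v \<notin> V"
  shows "is_tree (insert v V) (insert {u,v} E)"
proof -
  let ?E = "insert {u,v} E"
  have sg: "simple_graph V E" and cg: "connected_graph V E" and ac: "acyclic_graph E"
    using T is_tree_def by auto
  have uv: "u \<noteq> v" using u v by blast
  have sg': "simple_graph (insert v V) ?E"
    using sg uv u unfolding simple_graph_def by blast
  have le: "adj E \<le> adj ?E" unfolding adj_def by auto
  have mono: "(adj E)\<^sup>*\<^sup>* a b \<Longrightarrow> (adj ?E)\<^sup>*\<^sup>* a b" for a b
    using rtranclp_mono[OF le] by (simp add: le_fun_def)
  have a1: "adj ?E u v" "adj ?E v u" using uv unfolding adj_def by (auto simp: insert_commute)
  have cg': "connected_graph (insert v V) ?E"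
    unfolding connected_graph_def
  proof (intro conjI ballI)
    show "insert v V \<noteq> {}" by simp
    fix a b assume a: "a \<in> insert v V" and b: "b \<in> insert v V"
    have au: "(adj ?E)\<^sup>*\<^sup>* a u"
    proof (cases "a = v")
      case True thus ?thesis using a1 by auto
    next
      case False thus ?thesis using a cg u mono unfolding connected_graph_def by auto
    qed
    have ub: "(adj ?E)\<^sup>*\<^sup>* u b"
    proof (cases "b = v")
      case True thus ?thesis using a1 by auto
    next
      case False thus ?thesis using b cg u mono unfolding connected_graph_def by auto
    qed
    show "(adj ?E)\<^sup>*\<^sup>* a b" using au ub by (rule rtranclp_trans)
  qed
  have key: "adj ?E a b \<Longrightarrow> (a = v \<longrightarrow> b = u) \<and> (b = v \<longrightarrow> a = u) \<and> (a \<noteq> v \<and> b \<noteq> v \<longrightarrow> adj E a b)" for a b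
  proof -
    assume h: "adj ?E a b"
    then have ab: "{a,b} \<in> ?E" "a \<noteq> b" unfolding adj_def by auto
    show ?thesis
    proof (cases "{a,b} = {u,v}")
      case True thus ?thesis using ab by (auto simp: doubleton_eq_iff adj_def)
    next
      case False
      then have "{a,b} \<in> E" using ab by auto
      then have "a \<in> V" "b \<in> V" using sg_edge[OF sg] by auto
      thus ?thesis using v \<open>{a,b} \<in> E\<close> ab unfolding adj_def by auto
    qed
  qed
  have ac': "acyclic_graph ?E"
    unfolding acyclic_graph_def
  proof
    assume "\<exists>c. is_cycle ?E c"
    then obtain c where c: "is_cycle ?E c" by blast
    have L: "length c \<ge> 3" and dc: "distinct c"
      and cons: "\<And>i. Suc i < length c \<Longrightarrow> adj ?E (c!i) (c!Suc i)"
      and lh: "adj ?E (last c) (hd c)" using c unfolding is_cycle_def by auto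
    have hd0: "hd c = c!0" using L by (cases c) auto
    have lastn: "last c = c!(length c - 1)" using L by (cases c rule: rev_cases) (auto simp: nth_append)
    show False
    proof (cases "v \<in> set c")
      case False
      have "is_cycle E c" unfolding is_cycle_def
      proof (intro conjI allI impI)
        show "3 \<le> length c" using L .
        show "distinct c" using dc .
        fix i assume i: "Suc i < length c"
        have "c!i \<noteq> v" "c!Suc i \<noteq> v" using False i nth_mem by (metis Suc_lessD)+
        thus "adj E (c!i) (c!Suc i)" using key[OF cons[OF i]] by blast
      next
        have "last c \<noteq> v" "hd c \<noteq> v" using False L
          by (metis empty_iff last_in_set list.set(1) list.size(3) not_numeral_le_zero hd_in_set)+
        thus "adj E (last c) (hd c)" using key[OF lh] by blast
      qed
      thus False using ac unfolding acyclic_graph_def by blast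
    next
      case True
      then obtain i where i: "i < length c" "c!i = v" by (metis in_set_conv_nth)
      have neq: "j < length c \<Longrightarrow> k < length c \<Longrightarrow> j \<noteq> k \<Longrightarrow> c!j \<noteq> c!k" for j k
        using dc by (simp add: nth_eq_iff_index_eq)
      show False
      proof (cases "i = 0")
        case True
        have "c!1 = u" using key[OF cons[of 0]] i True L by auto
        moreover have "c!(length c - 1) = u" using key[OF lh] i True hd0 lastn by auto
        moreover have "1 \<noteq> length c - 1" "length c - 1 < length c" "1 < length c" using L by arith+
        ultimately show False using neq[of 1 "length c - 1"] by auto
      next
        case False
        show False
        proof (cases "i = length c - 1")
          case True
          have s1: "Suc (length c - 2) < length c" "Suc (length c - 2) = length c - 1" using L by arith+
          have "c!(length c - 2) = u" using key[OF cons[OF s1(1)]] i True s1(2) by auto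
          moreover have "c!0 = u" using key[OF lh] i True hd0 lastn by auto
          moreover have "0 \<noteq> length c - 2" "length c - 2 < length c" "0 < length c" using L by arith+
          ultimately show False using neq[of 0 "length c - 2"] by auto
        next
          case False2: False
          have "c!(i-1) = u" using key[OF cons[of "i-1"]] i False by auto
          moreover have "c!(i+1) = u" using key[OF cons[of "i"]] i False2 by auto
          moreover have "i - 1 < length c" "Suc i < length c" "i - 1 \<noteq> Suc i" using i False2 False by arith+
          ultimately show False using neq[of "i-1" "i+1"] by auto
        qed
      qed
    qed
  qed
  show ?thesis using sg' cg' ac' is_tree_def by blast
qed

lemma attach_leaves:
  assumes "finite L" "is_tree V E" "x \<in> V" "L \<inter> V = {}"
  shows "is_tree (V \<union> L) (E \<union> (\<lambda>l. {x,l}) ` L)"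
  using assms
proof (induction L rule: finite_induct)
  case empty thus ?case by simp
next
  case (insert l L)
  have T: "is_tree (V \<union> L) (E \<union> (\<lambda>l. {x,l}) ` L)" using insert by auto
  have "l \<notin> V \<union> L" using insert by auto
  from add_leaf[OF T _ this, of x] insert.prems(2)
  have T': "is_tree (insert l (V \<union> L)) (insert {x,l} (E \<union> (\<lambda>l. {x,l}) ` L))" by auto
  have e1: "insert l (V \<union> L) = V \<union> insert l L" by auto
  have e2: "insert {x,l} (E \<union> (\<lambda>l. {x,l}) ` L) = E \<union> (\<lambda>l. {x,l}) ` insert l L" by blast
  from T' show ?case by (simp only: e1 e2)
qed

lemma matching_le_cover:
  assumes M: "is_matching E M" and C: "finite C" and cov: "\<forall>e\<in>E. \<exists>c\<in>C. c \<in> e"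
  shows "card M \<le> card C"
proof -
  define g where "g e = (SOME c. c \<in> C \<and> c \<in> e)" for e
  have g: "e \<in> M \<Longrightarrow> g e \<in> C \<and> g e \<in> e" for e
  proof -
    assume "e \<in> M"
    then have "e \<in> E" using M unfolding is_matching_def by auto
    then have "\<exists>c. c \<in> C \<and> c \<in> e" using cov by auto
    thus ?thesis unfolding g_def by (rule someI_ex)
  qed
  have "inj_on g M"
  proof (rule inj_onI)
    fix a b assume a: "a \<in> M" and b: "b \<in> M" and eq: "g a = g b"
    have "g a \<in> a \<inter> b" using g[OF a] g[OF b] eq by auto
    thus "a = b" using M a b unfolding is_matching_def by blast
  qed
  moreover have "g ` M \<subseteq> C" using g by auto
  ultimately show ?thesis using card_inj_on_le C by blast
qed

lemma star_exists:
  assumes V: "finite V" and s: "s \<in> V" and l0: "l0 \<in> V" "l0 \<noteq> s"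
  shows "\<exists>E M C. is_tree V E \<and> (\<forall>v\<in>V. degree E v = (if v = s then card V - 1 else 1))
     \<and> is_matching E M \<and> C \<subseteq> V \<and> (\<forall>e\<in>E. \<exists>c\<in>C. c \<in> e) \<and> card M = 1 \<and> card C = 1"
proof -
  let ?L = "V - {s}"
  let ?E = "(\<lambda>l. {s,l}) ` ?L"
  have T0: "is_tree ({s} \<union> ?L) ({} \<union> ?E)"
    by (rule attach_leaves) (use V tree_single in auto)
  have VV: "{s} \<union> ?L = V" using s by auto
  have T: "is_tree V ?E" using T0 VV by simp
  have inj: "inj_on (\<lambda>l. {s,l}) ?L" by (rule inj_onI) (auto simp: doubleton_eq_iff)
  have deg: "degree ?E v = (if v = s then card V - 1 else 1)" if v: "v \<in> V" for v
  proof (cases "v = s")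
    case True
    have "{e \<in> ?E. v \<in> e} = ?E" using True by auto
    hence "degree ?E v = card ?E" unfolding degree_def by simp
    also have "\<dots> = card ?L" using card_image[OF inj] .
    also have "\<dots> = card V - 1" using s V by simp
    finally show ?thesis using True by simp
  next
    case False
    have "{e \<in> ?E. v \<in> e} = {{s,v}}" using False v by auto
    thus ?thesis using False unfolding degree_def by simp
  qed
  have M: "is_matching ?E {{s,l0}}" unfolding is_matching_def using l0 by auto
  have cov: "\<forall>e\<in>?E. \<exists>c\<in>{s}. c \<in> e" by auto
  show ?thesis
    apply (rule exI[of _ ?E], rule exI[of _ "{{s,l0}}"], rule exI[of _ "{s}"])
    using T deg M cov s by auto
qed

lemma step_build:
  assumes T: "is_tree V' E'" and M': "is_matching E' M'" and C': "C' \<subseteq> V'" "\<forall>e\<in>E'. \<exists>c\<in>C'. c \<in> e"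
    and cM: "card M' = N" "card C' = N"
    and w: "w \<in> V'" and x: "x \<notin> V'" "x \<notin> Lx" and Lx: "finite Lx" "Lx \<inter> V' = {}" "l0 \<in> Lx"
  defines "E \<equiv> insert {w,x} E' \<union> (\<lambda>l. {x,l}) ` Lx"
  shows "is_tree (insert x V' \<union> Lx) E \<and>
    (\<forall>v\<in>V'. v \<noteq> w \<longrightarrow> degree E v = degree E' v) \<and>
    degree E w = degree E' w + 1 \<and> degree E x = card Lx + 1 \<and> (\<forall>l\<in>Lx. degree E l = 1) \<and>
    is_matching E (insert {x,l0} M') \<and> insert x C' \<subseteq> insert x V' \<union> Lx \<and>
    (\<forall>e\<in>E. \<exists>c\<in>insert x C'. c\<in>e) \<and>
    card (insert {x,l0} M') = Suc N \<and> card (insert x C') = Suc N"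
proof -
  have sg: "simple_graph V' E'" using T is_tree_def by blast
  have finV: "finite V'" using sg simple_graph_def by blast
  have finE: "finite E'" using sg_finE[OF sg] .
  have sub: "e \<in> E' \<Longrightarrow> e \<subseteq> V'" for e using sg_edge[OF sg] .
  have T1: "is_tree (insert x V') (insert {w,x} E')" using add_leaf[OF T w x(1)] .
  have T2: "is_tree (insert x V' \<union> Lx) (insert {w,x} E' \<union> (\<lambda>l. {x,l}) ` Lx)"
    by (rule attach_leaves[OF Lx(1) T1]) (use Lx x in auto)
  have lw: "w \<notin> Lx" using w Lx by auto
  have wx: "w \<noteq> x" using w x by auto
  have d1: "degree E v = degree E' v" if v: "v \<in> V'" "v \<noteq> w" for v
  proof -
    have "{e \<in> E. v \<in> e} = {e \<in> E'. v \<in> e}"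
      using v x Lx unfolding E_def by auto
    thus ?thesis unfolding degree_def by simp
  qed
  have xE: "{w,x} \<notin> E'" using sub x by auto
  have d2: "degree E w = degree E' w + 1"
  proof -
    have "{e \<in> E. w \<in> e} = insert {w,x} {e \<in> E'. w \<in> e}"
      using lw x wx unfolding E_def by auto
    moreover have "finite {e \<in> E'. w \<in> e}" using finE by simp
    ultimately show ?thesis unfolding degree_def using xE by simp
  qed
  have inj: "inj_on (\<lambda>l. {x,l}) Lx" by (rule inj_onI) (auto simp: doubleton_eq_iff)
  have d3: "degree E x = card Lx + 1"
  proof -
    have "{e \<in> E. x \<in> e} = insert {w,x} ((\<lambda>l. {x,l}) ` Lx)"
      using sub x unfolding E_def by auto
    moreover have "{w,x} \<notin> (\<lambda>l. {x,l}) ` Lx" using lw x w by (auto simp: doubleton_eq_iff)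
    ultimately show ?thesis unfolding degree_def using card_image[OF inj] Lx by simp
  qed
  have d4: "degree E l = 1" if l: "l \<in> Lx" for l
  proof -
    have "{e \<in> E. l \<in> e} = {{x,l}}"
      using sub x l Lx lw unfolding E_def by auto
    thus ?thesis unfolding degree_def by simp
  qed
  have Msub: "M' \<subseteq> E'" using M' is_matching_def by blast
  have mat: "is_matching E (insert {x,l0} M')"
    unfolding is_matching_def
  proof (intro conjI ballI impI)
    show "insert {x,l0} M' \<subseteq> E" using Msub Lx unfolding E_def by auto
    fix e f assume e: "e \<in> insert {x,l0} M'" and f: "f \<in> insert {x,l0} M'" and ne: "e \<noteq> f"
    show "e \<inter> f = {}"
    proof (cases "e = {x,l0}")
      case True
      then have "f \<in> M'" using f ne by auto
      then have "f \<subseteq> V'" using Msub sub by auto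
      thus ?thesis using True x Lx by auto
    next
      case False
      then have eM: "e \<in> M'" using e by auto
      show ?thesis
      proof (cases "f = {x,l0}")
        case True
        have "e \<subseteq> V'" using eM Msub sub by auto
        thus ?thesis using True x Lx by auto
      next
        case False
        then have "f \<in> M'" using f by auto
        thus ?thesis using eM ne M' unfolding is_matching_def by blast
      qed
    qed
  qed
  have cov: "\<forall>e\<in>E. \<exists>c\<in>insert x C'. c\<in>e" using C'(2) unfolding E_def by auto
  have cM1: "card (insert {x,l0} M') = Suc N"
  proof -
    have "{x,l0} \<notin> M'" using Msub sub x by auto
    moreover have "finite M'" using Msub finE finite_subset by blast
    ultimately show ?thesis using cM by simp
  qed
  have cC1: "card (insert x C') = Suc N"
  proof -
    have "x \<notin> C'" using C' x by auto
    moreover have "finite C'" using C' finV finite_subset by blast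
    ultimately show ?thesis using cM by simp
  qed
  show ?thesis using T2 d1 d2 d3 d4 mat cov cM1 cC1 C'(1) unfolding E_def by blast
qed

lemma all_one:
  fixes f :: "'a \<Rightarrow> nat"
  assumes "finite A" "\<forall>v\<in>A. f v \<ge> 1" "sum f A \<le> card A" "v \<in> A"
  shows "f v = 1"
proof (rule ccontr)
  assume "f v \<noteq> 1"
  then have "f v \<ge> 2" using assms by force
  have "sum f A = f v + sum f (A - {v})" using assms sum.remove by metis
  moreover have "sum f (A - {v}) \<ge> card (A - {v})"
    using sum_bounded_below[of "A - {v}" 1 f] assms by simp
  moreover have "card (A - {v}) = card A - 1" using assms by simp
  moreover have "card A \<ge> 1" using assms(1,4) card_gt_0_iff[of A] by auto
  ultimately show False using \<open>f v \<ge> 2\<close> assms(3) by linarith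
qed

lemma construct:
  fixes f :: "'a \<Rightarrow> nat"
  assumes "finite V" "card V \<ge> 2" "\<forall>v\<in>V. f v \<ge> 1" "sum f V = 2 * card V - 2"
    "S \<subseteq> V" "card S = N" "N \<ge> 1" "sum f S \<ge> card V - 1" "2 * N \<le> card V"
    "N = 1 \<or> (\<forall>s\<in>S. f s \<ge> 2)"
  shows "\<exists>E M C. is_tree V E \<and> (\<forall>v\<in>V. degree E v = f v) \<and> is_matching E M \<and> C \<subseteq> V \<and>
           (\<forall>e\<in>E. \<exists>c\<in>C. c \<in> e) \<and> card M = N \<and> card C = N"
  using assms
proof (induction N arbitrary: V f S)
  case 0 thus ?case by simp
next
  case (Suc N)
  note P = Suc.prems
  define n where "n = card V"
  show ?case
  proof (cases "N = 0")
    case True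
    then obtain s where S: "S = {s}" using P(6) card_1_singletonE by auto
    have sV: "s \<in> V" using S P(5) by auto
    have fs: "f s \<ge> n - 1" using P(8) S n_def by simp
    have split: "sum f V = f s + sum f (V - {s})" using P(1) sV sum.remove by metis
    have cs: "card (V - {s}) = n - 1" using P(1) sV n_def by simp
    have ge: "sum f (V - {s}) \<ge> n - 1"
      using sum_bounded_below[of "V - {s}" 1 f] P(3) cs by simp
    have le: "sum f (V - {s}) \<le> card (V - {s})" using split P(4) fs cs n_def P(2) by linarith
    have fs': "f s = n - 1" using split P(4) ge n_def P(2) fs by linarith
    have others: "v \<in> V - {s} \<Longrightarrow> f v = 1" for v
      using all_one[of "V - {s}" f v] P(1,3) le by auto
    obtain l0 where l0: "l0 \<in> V" "l0 \<noteq> s"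
    proof -
      have "card (V - {s}) \<ge> 1" using cs P(2) n_def by simp
      then obtain l0 where "l0 \<in> V - {s}" by (metis card_0_eq empty_iff finite_Diff P(1) not_one_le_zero ex_in_conv)
      thus ?thesis using that by auto
    qed
    obtain E M C where EMC: "is_tree V E" "\<forall>v\<in>V. degree E v = (if v = s then card V - 1 else 1)"
      "is_matching E M" "C \<subseteq> V" "\<forall>e\<in>E. \<exists>c\<in>C. c \<in> e" "card M = 1" "card C = 1"
      using star_exists[OF P(1) sV l0] by blast
    have "\<forall>v\<in>V. degree E v = f v" using EMC(2) fs' others n_def by auto
    thus ?thesis using EMC True by auto
  next
    case False
    define N' where "N' = Suc N"
    have N2: "N' \<ge> 2" using False N'_def by simp
    have f2: "\<forall>s\<in>S. f s \<ge> 2" using P(10) False by auto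
    have finS: "finite S" using P(1,5) finite_subset by blast
    have Sne: "S \<noteq> {}" using P(6) by auto
    obtain x where xS: "x \<in> S" and xmin: "\<forall>y\<in>S. f x \<le> f y"
    proof -
      have "Min (f ` S) \<in> f ` S" using finS Sne by simp
      then obtain x where "x \<in> S" "f x = Min (f ` S)" by auto
      moreover have "\<forall>y\<in>S. Min (f ` S) \<le> f y" using finS by simp
      ultimately show ?thesis using that by metis
    qed
    define a where "a = f x"
    have a2: "a \<ge> 2" using f2 xS a_def by auto
    define Lv where "Lv = {v \<in> V. f v = 1}"
    define Ot where "Ot = V - S - Lv"
    have finLv: "finite Lv" "finite Ot" using P(1) Lv_def Ot_def by auto
    have SLv: "S \<inter> Lv = {}" using f2 Lv_def by force
    have Vsplit: "V = S \<union> Ot \<union> Lv" using P(5) Ot_def Lv_def by auto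
    have disj: "S \<inter> Ot = {}" "(S \<union> Ot) \<inter> Lv = {}" using Ot_def SLv by auto
    have cardV: "n = N' + card Ot + card Lv"
    proof -
      have "card V = card (S \<union> Ot) + card Lv"
        using Vsplit disj finS finLv card_Un_disjoint by (metis finite_UnI)
      also have "card (S \<union> Ot) = card S + card Ot" using disj finS finLv card_Un_disjoint by metis
      finally show ?thesis using n_def P(6) N'_def by simp
    qed
    have sumV: "sum f V = sum f S + sum f Ot + sum f Lv"
    proof -
      have "sum f V = sum f (S \<union> Ot) + sum f Lv"
        using Vsplit disj finS finLv sum.union_disjoint by (metis finite_UnI)
      also have "sum f (S \<union> Ot) = sum f S + sum f Ot" using disj finS finLv sum.union_disjoint by metis
      finally show ?thesis .
    qed
    have sLv: "sum f Lv = card Lv" using Lv_def by simp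
    have sO: "sum f Ot \<ge> 2 * card Ot"
      using sum_bounded_below[of Ot 2 f] Ot_def Lv_def P(3) by force
    have sS: "sum f S \<ge> N' * a"
      using sum_bounded_below[of S a f] xmin a_def P(6) N'_def by (simp add: mult.commute)
    have main: "card Lv + 2 * N' \<ge> N' * a + 2"
      using sumV sLv sO sS cardV P(4) n_def N2 by linarith
    have prod1: "int N' * int a \<ge> 2 * int N' + int a - 2"
    proof -
      have "(int N' - 1) * (int a - 2) \<ge> 0" using N2 a2 by simp
      thus ?thesis by (simp add: algebra_simps)
    qed
    have Lvbig: "card Lv \<ge> a - 1"
    proof -
      have "int (card Lv) + 2 * int N' \<ge> int N' * int a + 2" using main by (metis of_nat_add of_nat_le_iff of_nat_mult of_nat_numeral)
      thus ?thesis using prod1 N2 a2 by linarith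
    qed
    have room: "2 * N \<le> n - a"
    proof (cases "a = 2")
      case True thus ?thesis using P(9) n_def N'_def by simp
    next
      case False
      then have a3: "a \<ge> 3" using a2 by simp
      have "(int N' - 1) * (int a - 3) \<ge> 0" using N2 a3 by simp
      then have "int N' * int a \<ge> 3 * int N' + int a - 3" by (simp add: algebra_simps)
      moreover have "int (card Lv) + 2 * int N' \<ge> int N' * int a + 2" using main by (metis of_nat_add of_nat_le_iff of_nat_mult of_nat_numeral)
      ultimately show ?thesis using cardV N'_def by linarith
    qed
    obtain Lx where Lx: "Lx \<subseteq> Lv" "card Lx = a - 1" "finite Lx"
      using obtain_subset_with_card_n[OF Lvbig] by metis
    have "Lx \<noteq> {}" using Lx a2 by (intro notI) simp
    then obtain l0 where l0: "l0 \<in> Lx" by blast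
    obtain w where w: "w \<in> V" "w \<noteq> x" "f w \<ge> 2"
      and wcase: "(w \<notin> S) \<or> (Ot = {} \<and> w \<in> S \<and> (N = 1 \<or> f w \<ge> 3))"
    proof (cases "Ot = {}")
      case False
      then obtain w where "w \<in> Ot" by auto
      thus ?thesis using that Ot_def Lv_def P(3) xS by force
    next
      case Oe: True
      have sumS: "sum f S = n + N' - 2" using sumV sLv Oe cardV P(4) n_def by simp
      show ?thesis
      proof (cases "N = 1")
        case True
        then have "card (S - {x}) = 1" using P(6) xS finS by simp
        then obtain w where "w \<in> S - {x}" by (metis card_0_eq empty_iff finite_Diff finS zero_neq_one ex_in_conv)
        thus ?thesis using that f2 P(5) True Oe by auto
      next
        case N1: False
        have "\<exists>w\<in>S - {x}. f w \<ge> 3"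
        proof (rule ccontr)
          assume nw: "\<not> ?thesis"
          have h: "\<forall>y\<in>S - {x}. f y \<le> 2"
          proof
            fix y assume "y \<in> S - {x}"
            then have "\<not> f y \<ge> 3" using nw by blast
            thus "f y \<le> 2" by linarith
          qed
          have "card (S - {x}) \<ge> 1" using P(6) xS finS N2 N'_def by simp
          then have "S - {x} \<noteq> {}" by (intro notI) simp
          then obtain y0 where y0: "y0 \<in> S - {x}" by blast
          have "\<forall>y\<in>S. f y \<le> 2"
          proof
            fix y assume "y \<in> S"
            show "f y \<le> 2"
            proof (cases "y = x")
              case True
              have "f x \<le> f y0" "f y0 \<le> 2" using xmin y0 h by auto
              thus ?thesis using True by simp
            next
              case False thus ?thesis using h \<open>y \<in> S\<close> by auto
            qed
          qed
          then have "sum f S \<le> 2 * N'" using sum_mono[of S f "\<lambda>_. 2"] P(6) N'_def by simp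
          thus False using sumS P(9) n_def N'_def N1 False by arith
        qed
        then obtain w where "w \<in> S - {x}" "f w \<ge> 3" by blast
        thus ?thesis using that P(5) Oe by auto
      qed
    qed
    have xLx: "x \<notin> Lx" using Lx Lv_def a2 a_def by auto
    have wLx: "w \<notin> Lx" using Lx Lv_def w by auto
    define V' where "V' = V - insert x Lx"
    define f' where "f' = f(w := f w - 1)"
    define S' where "S' = S - {x}"
    have xV: "x \<in> V" using xS P(5) by auto
    have LxV: "Lx \<subseteq> V" using Lx Lv_def by auto
    have finV': "finite V'" using P(1) V'_def by simp
    have cardV': "card V' = n - a"
    proof -
      have "card (insert x Lx) = a" using xLx Lx a2 by simp
      moreover have "insert x Lx \<subseteq> V" using xV LxV by auto
      ultimately show ?thesis using V'_def n_def card_Diff_subset[of "insert x Lx" V] Lx(3) by simp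
    qed
    have wV': "w \<in> V'" using w wLx V'_def by auto
    have c1: "card V' \<ge> 2" using room cardV' False by simp
    have c2: "\<forall>v\<in>V'. f' v \<ge> 1" using P(3) V'_def f'_def w by auto
    have sumLx: "sum f Lx = a - 1" using Lx Lv_def by (metis (mono_tags, lifting) card_eq_sum mem_Collect_eq subsetD sum.cong)
    have sumsplit: "sum f V = a + (a - 1) + sum f V'"
    proof -
      have "sum f V = sum f (insert x Lx) + sum f V'"
        using V'_def P(1) xV LxV sum.subset_diff[of "insert x Lx" V f] by auto
      thus ?thesis using sumLx xLx Lx(3) a_def by simp
    qed
    have sumf': "sum f' V' = sum f V' - 1"
    proof -
      have "sum f V' = f w + sum f (V' - {w})" using finV' wV' sum.remove by metis
      moreover have "sum f' V' = f' w + sum f' (V' - {w})" using finV' wV' sum.remove by metis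
      moreover have "sum f' (V' - {w}) = sum f (V' - {w})" using f'_def by simp
      ultimately show ?thesis using f'_def w by simp
    qed
    have c3: "sum f' V' = 2 * card V' - 2"
      using sumf' sumsplit P(4) n_def cardV' room a2 False by simp
    have c4: "S' \<subseteq> V'" using S'_def V'_def P(5) SLv Lx by auto
    have c5: "card S' = N" using S'_def P(6) xS finS by simp
    have c6: "sum f' S' \<ge> card V' - 1"
    proof (cases "w \<in> S")
      case False
      have "sum f' S' = sum f S'" using False f'_def S'_def by (intro sum.cong) auto
      also have "sum f S = f x + sum f S'" using S'_def finS xS sum.remove by metis
      ultimately show ?thesis using P(8) cardV' a_def n_def by simp
    next
      case True
      then have Oe: "Ot = {}" using wcase by auto
      have sumS: "sum f S = n + N' - 2" using sumV sLv Oe cardV P(4) n_def by simp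
      have wS': "w \<in> S'" using True w S'_def by auto
      have finS': "finite S'" using finS S'_def by simp
      have "sum f' S' = sum f S' - 1"
      proof -
        have "sum f S' = f w + sum f (S' - {w})" using finS' wS' sum.remove by metis
        moreover have "sum f' S' = f' w + sum f' (S' - {w})" using finS' wS' sum.remove by metis
        moreover have "sum f' (S' - {w}) = sum f (S' - {w})" using f'_def by simp
        ultimately show ?thesis using f'_def w by simp
      qed
      moreover have "sum f S = f x + sum f S'" using S'_def finS xS sum.remove by metis
      ultimately show ?thesis using sumS cardV' a_def n_def N2 by simp
    qed
    have c7: "2 * N \<le> card V'" using room cardV' by simp
    have c8: "N = 1 \<or> (\<forall>s\<in>S'. f' s \<ge> 2)"
    proof (cases "N = 1")
      case True thus ?thesis by simp
    next
      case N1: False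
      have "\<forall>s\<in>S'. f' s \<ge> 2"
      proof
        fix s assume s: "s \<in> S'"
        show "f' s \<ge> 2"
        proof (cases "s = w")
          case True
          then have "w \<in> S" using s S'_def by auto
          then have "f w \<ge> 3" using wcase N1 by auto
          thus ?thesis using True f'_def by simp
        next
          case False thus ?thesis using s f2 S'_def f'_def by auto
        qed
      qed
      thus ?thesis by simp
    qed
    have N1: "N \<ge> 1" using False by simp
    obtain E' M' C' where IH: "is_tree V' E'" "\<forall>v\<in>V'. degree E' v = f' v" "is_matching E' M'"
      "C' \<subseteq> V'" "\<forall>e\<in>E'. \<exists>c\<in>C'. c \<in> e" "card M' = N" "card C' = N"
      using Suc.IH[OF finV' c1 c2 c3 c4 c5 N1 c6 c7 c8] by blast
    have xV': "x \<notin> V'" using V'_def by auto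
    have LxV': "Lx \<inter> V' = {}" using V'_def by auto
    define E where "E = insert {w,x} E' \<union> (\<lambda>l. {x,l}) ` Lx"
    have SB: "is_tree (insert x V' \<union> Lx) E \<and>
      (\<forall>v\<in>V'. v \<noteq> w \<longrightarrow> degree E v = degree E' v) \<and>
      degree E w = degree E' w + 1 \<and> degree E x = card Lx + 1 \<and> (\<forall>l\<in>Lx. degree E l = 1) \<and>
      is_matching E (insert {x,l0} M') \<and> insert x C' \<subseteq> insert x V' \<union> Lx \<and>
      (\<forall>e\<in>E. \<exists>c\<in>insert x C'. c\<in>e) \<and>
      card (insert {x,l0} M') = Suc N \<and> card (insert x C') = Suc N"
      unfolding E_def by (rule step_build[OF IH(1,3,4,5,6,7) wV' xV' xLx Lx(3) LxV' l0])
    have VV: "insert x V' \<union> Lx = V" using V'_def xV LxV by auto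
    have degs: "\<forall>v\<in>V. degree E v = f v"
    proof
      fix v assume v: "v \<in> V"
      show "degree E v = f v"
      proof (cases "v \<in> V'")
        case True
        show ?thesis
        proof (cases "v = w")
          case True thus ?thesis using SB IH(2) wV' f'_def w by simp
        next
          case False thus ?thesis using SB IH(2) \<open>v \<in> V'\<close> f'_def by simp
        qed
      next
        case False
        then have "v = x \<or> v \<in> Lx" using v V'_def by auto
        thus ?thesis
        proof
          assume "v = x" thus ?thesis using SB Lx a_def a2 by simp
        next
          assume "v \<in> Lx" thus ?thesis using SB Lx Lv_def by auto
        qed
      qed
    qed
    show ?thesis using SB VV degs by (metis)
  qed
qed

lemma leaf_exists:
  assumes sg: "simple_graph V E" and ac: "acyclic_graph E" and ne: "E \<noteq> {}"
  shows "\<exists>u v. {u,v} \<in> E \<and> u \<noteq> v \<and> (\<forall>e\<in>E. v \<in> e \<longrightarrow> e = {u,v})"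
proof -
  define isp where "isp p \<longleftrightarrow> distinct p \<and> set p \<subseteq> V \<and> length p \<ge> 2 \<and>
     (\<forall>i. Suc i < length p \<longrightarrow> adj E (p!i) (p!Suc i))" for p
  have finV: "finite V" using sg simple_graph_def by blast
  have "{p. isp p} \<subseteq> {p. set p \<subseteq> V \<and> length p \<le> card V}"
  proof
    fix p assume "p \<in> {p. isp p}"
    then have d: "distinct p" and s: "set p \<subseteq> V" unfolding isp_def by auto
    have "length p = card (set p)" using distinct_card[OF d] by simp
    also have "\<dots> \<le> card V" using card_mono[OF finV s] .
    finally show "p \<in> {p. set p \<subseteq> V \<and> length p \<le> card V}" using s by simp
  qed
  then have finP: "finite {p. isp p}"
    using finite_lists_length_le[OF finV] finite_subset by blast
  obtain e0 where "e0 \<in> E" using ne by blast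
  then obtain a b where ab: "e0 = {a,b}" "a \<noteq> b" "a \<in> V" "b \<in> V" using sg_edge2[OF sg] by blast
  have "isp [a,b]" unfolding isp_def adj_def using ab \<open>e0 \<in> E\<close> by (auto simp: less_Suc_eq)
  then have Pne: "{p. isp p} \<noteq> {}" by blast
  define m where "m = Max (length ` {p. isp p})"
  have "m \<in> length ` {p. isp p}" unfolding m_def using finP Pne by simp
  then obtain p where p: "isp p" "length p = m" by auto
  have pmax: "isp q \<Longrightarrow> length q \<le> length p" for q
    using p finP unfolding m_def by simp
  define L where "L = length p"
  have L2: "L \<ge> 2" using p isp_def L_def by simp
  define v where "v = p!(L-1)"
  define u where "u = p!(L-2)"
  have dp: "distinct p" and sp: "set p \<subseteq> V" and ad: "\<And>i. Suc i < L \<Longrightarrow> adj E (p!i) (p!Suc i)"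
    using p unfolding isp_def L_def by auto
  have s1: "Suc (L - 2) < L" "Suc (L - 2) = L - 1" using L2 by arith+
  have uv: "adj E u v" using ad[OF s1(1)] unfolding u_def v_def s1(2) .
  have key: "e = {u,v}" if e: "e \<in> E" "v \<in> e" for e
  proof -
    obtain c1 c2 where c: "e = {c1,c2}" "c1 \<noteq> c2" "c1 \<in> V" "c2 \<in> V" using sg_edge2[OF sg e(1)] by blast
    obtain y where y: "e = {v,y}" "y \<noteq> v" "y \<in> V" using c e(2) by auto
    have avy: "adj E v y" using y e(1) unfolding adj_def by auto
    show ?thesis
    proof (cases "y \<in> set p")
      case False
      have "isp (p @ [y])" unfolding isp_def
      proof (intro conjI allI impI)
        show "distinct (p @ [y])" using dp False by simp
        show "set (p @ [y]) \<subseteq> V" using sp y by simp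
        show "2 \<le> length (p @ [y])" using L2 L_def by simp
        fix i assume i: "Suc i < length (p @ [y])"
        show "adj E ((p @ [y]) ! i) ((p @ [y]) ! Suc i)"
        proof (cases "Suc i < L")
          case True thus ?thesis using ad[OF True] L_def by (simp add: nth_append)
        next
          case False
          then have "i = L - 1" "Suc i = L" using i L_def by auto
          thus ?thesis using avy L_def L2 v_def by (simp add: nth_append)
        qed
      qed
      then have "length (p @ [y]) \<le> length p" using pmax by blast
      thus ?thesis by simp
    next
      case True
      then obtain j where j: "j < L" "p!j = y" using L_def by (metis in_set_conv_nth)
      have jv: "j \<noteq> L - 1" using j y v_def by auto
      show ?thesis
      proof (cases "j = L - 2")
        case True thus ?thesis using y j u_def by auto
      next
        case False
        then have jl: "j + 3 \<le> L" using j jv by arith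
        define c where "c = drop j p"
        have lc: "length c = L - j" using c_def L_def by simp
        have "is_cycle E c" unfolding is_cycle_def
        proof (intro conjI allI impI)
          show "3 \<le> length c" using lc jl by simp
          show "distinct c" using dp c_def by simp
          fix i assume i: "Suc i < length c"
          have "c!i = p!(j+i)" "c!Suc i = p!Suc (j+i)" using i lc c_def L_def by simp_all
          thus "adj E (c!i) (c!Suc i)" using ad[of "j+i"] i lc by simp
        next
          have "last c = v" using c_def v_def L_def jl by (simp add: last_conv_nth)
          moreover have "hd c = y" using c_def j L_def by (simp add: hd_drop_conv_nth)
          ultimately show "adj E (last c) (hd c)" using avy by simp
        qed
        thus ?thesis using ac acyclic_graph_def by blast
      qed
    qed
  qed
  show ?thesis using uv key unfolding adj_def by blast
qed

lemma konig_forest: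
  assumes "simple_graph V E" "acyclic_graph E"
  shows "\<exists>M C. is_matching E M \<and> C \<subseteq> V \<and> (\<forall>e\<in>E. \<exists>c\<in>C. c\<in>e) \<and> card C \<le> card M"
  using assms
proof (induction "card E" arbitrary: E rule: less_induct)
  case less
  have finV: "finite V" using less.prems simple_graph_def by blast
  have finE: "finite E" using sg_finE less.prems by blast
  show ?case
  proof (cases "E = {}")
    case True
    show ?thesis
      by (rule exI[of _ "{}"], rule exI[of _ "{}"]) (simp add: is_matching_def True)
  next
    case False
    obtain u v where uv: "{u,v} \<in> E" "u \<noteq> v" "\<forall>e\<in>E. v \<in> e \<longrightarrow> e = {u,v}"
      using leaf_exists[OF less.prems False] by blast
    define E' where "E' = {e\<in>E. u \<notin> e \<and> v \<notin> e}"
    have sub: "E' \<subseteq> E" using E'_def by auto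
    have "{u,v} \<notin> E'" using E'_def by auto
    then have "E' \<subset> E" using sub uv by blast
    then have lt: "card E' < card E" using finE psubset_card_mono by blast
    have sg': "simple_graph V E'" using less.prems(1) sub unfolding simple_graph_def by blast
    have ac': "acyclic_graph E'" using acyclic_subset[OF less.prems(2) sub] .
    obtain M' C' where IH: "is_matching E' M'" "C' \<subseteq> V" "\<forall>e\<in>E'. \<exists>c\<in>C'. c\<in>e" "card C' \<le> card M'"
      using less.hyps[OF lt sg' ac'] by blast
    have uV: "u \<in> V" using sg_edge[OF less.prems(1) uv(1)] by auto
    have Msub: "M' \<subseteq> E'" using IH(1) is_matching_def by blast
    have mat: "is_matching E (insert {u,v} M')"
      unfolding is_matching_def
    proof (intro conjI ballI impI)
      show "insert {u,v} M' \<subseteq> E" using Msub sub uv(1) by blast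
      fix e f assume e: "e \<in> insert {u,v} M'" and f: "f \<in> insert {u,v} M'" and ne: "e \<noteq> f"
      show "e \<inter> f = {}"
      proof (cases "e = {u,v}")
        case True
        then have "f \<in> E'" using f ne Msub by auto
        thus ?thesis using True E'_def by auto
      next
        case False
        then have eM: "e \<in> M'" using e by auto
        show ?thesis
        proof (cases "f = {u,v}")
          case True
          have "e \<in> E'" using eM Msub by auto
          thus ?thesis using True E'_def by auto
        next
          case False
          then have "f \<in> M'" using f by auto
          thus ?thesis using eM ne IH(1) unfolding is_matching_def by blast
        qed
      qed
    qed
    have cov: "\<forall>e\<in>E. \<exists>c\<in>insert u C'. c\<in>e"
    proof
      fix e assume e: "e \<in> E"
      show "\<exists>c\<in>insert u C'. c\<in>e"
      proof (cases "u \<in> e")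
        case True thus ?thesis by blast
      next
        case False
        show ?thesis
        proof (cases "v \<in> e")
          case True then have "e = {u,v}" using uv e by blast
          thus ?thesis by blast
        next
          case False
          then have "e \<in> E'" using \<open>u \<notin> e\<close> e E'_def by auto
          thus ?thesis using IH(3) by blast
        qed
      qed
    qed
    have finM: "finite M'" using finite_subset[OF subset_trans[OF Msub sub] finE] .
    have finC: "finite C'" using finite_subset[OF IH(2) finV] .
    have "{u,v} \<notin> M'" using \<open>{u,v} \<notin> E'\<close> Msub by blast
    then have "card (insert {u,v} M') = Suc (card M')" using finM by simp
    moreover have "card (insert u C') \<le> Suc (card C')" using finC by (simp add: card_insert_if)
    ultimately have le: "card (insert u C') \<le> card (insert {u,v} M')" using IH(4) by simp
    have Cs: "insert u C' \<subseteq> V" using IH(2) uV by simp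
    show ?thesis
      apply (rule exI[of _ "insert {u,v} M'"], rule exI[of _ "insert u C'"])
      using mat cov Cs le by (intro conjI)
  qed
qed

lemma conn_ne_edge:
  assumes T: "is_tree V E" and a: "a \<in> V" and b: "b \<in> V" "b \<noteq> a"
  shows "\<exists>y. {a,y} \<in> E \<and> y \<noteq> a"
proof -
  have "(adj E)\<^sup>*\<^sup>* a b" using T a b unfolding is_tree_def connected_graph_def by blast
  then show ?thesis
  proof (rule converse_rtranclpE)
    assume "a = b" thus ?thesis using b by simp
  next
    fix y assume "adj E a y" thus ?thesis unfolding adj_def by blast
  qed
qed

lemma tree_remove_leaf:
  assumes T: "is_tree V E" and uv: "{u,v} \<in> E" "u \<noteq> v" and lf: "\<forall>e\<in>E. v \<in> e \<longrightarrow> e = {u,v}"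
  shows "is_tree (V - {v}) (E - {{u,v}})"
proof -
  let ?E = "E - {{u,v}}"
  have sg: "simple_graph V E" and cg: "connected_graph V E" and ac: "acyclic_graph E"
    using T is_tree_def by auto
  have uV: "u \<in> V" "v \<in> V" using sg_edge[OF sg uv(1)] by auto
  have sg': "simple_graph (V - {v}) ?E"
    unfolding simple_graph_def
  proof (intro conjI ballI)
    show "finite (V - {v})" using sg simple_graph_def by auto
    fix e assume e: "e \<in> ?E"
    obtain a b where ab: "e = {a,b}" "a \<noteq> b" "a \<in> V" "b \<in> V" using sg_edge2[OF sg] e by blast
    have "v \<notin> e" using lf e by blast
    thus "\<exists>a b. e = {a, b} \<and> a \<noteq> b \<and> a \<in> V - {v} \<and> b \<in> V - {v}" using ab by blast
  qed
  have ac': "acyclic_graph ?E" using acyclic_subset[OF ac] by blast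
  define g where "g z = (if z = v then u else z)" for z
  have stp: "adj E y z \<Longrightarrow> (adj ?E)\<^sup>*\<^sup>* (g y) (g z)" for y z
  proof -
    assume a: "adj E y z"
    then have yz: "{y,z} \<in> E" "y \<noteq> z" unfolding adj_def by auto
    show ?thesis
    proof (cases "y = v \<or> z = v")
      case True
      then have "v \<in> {y,z}" by blast
      then have "{y,z} = {u,v}" using lf[rule_format, OF yz(1)] by simp
      then have "g y = g z" using uv(2) yz(2) unfolding g_def by (auto simp: doubleton_eq_iff)
      thus ?thesis by simp
    next
      case False
      then have "{y,z} \<noteq> {u,v}" by (auto simp: doubleton_eq_iff)
      then have "adj ?E y z" using yz unfolding adj_def by auto
      thus ?thesis using False unfolding g_def by auto
    qed
  qed
  have reach: "(adj E)\<^sup>*\<^sup>* a b \<Longrightarrow> (adj ?E)\<^sup>*\<^sup>* (g a) (g b)" for a b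
  proof (induction rule: rtranclp_induct)
    case base thus ?case by simp
  next
    case (step y z) thus ?case using stp[OF step.hyps(2)] rtranclp_trans by metis
  qed
  have cg': "connected_graph (V - {v}) ?E"
    unfolding connected_graph_def
  proof (intro conjI ballI)
    show "V - {v} \<noteq> {}" using uV uv(2) by auto
    fix a b assume a: "a \<in> V - {v}" and b: "b \<in> V - {v}"
    have "(adj E)\<^sup>*\<^sup>* a b" using cg a b unfolding connected_graph_def by auto
    from reach[OF this] show "(adj ?E)\<^sup>*\<^sup>* a b" using a b unfolding g_def by auto
  qed
  show ?thesis using sg' cg' ac' is_tree_def by blast
qed

lemma tree_edges:
  assumes "is_tree V E"
  shows "card E = card V - 1"
  using assms
proof (induction "card V" arbitrary: V E rule: less_induct)
  case less
  have sg: "simple_graph V E" using less.prems is_tree_def by blast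
  have finV: "finite V" using sg simple_graph_def by blast
  have finE: "finite E" using sg_finE[OF sg] .
  have Vne: "V \<noteq> {}" using less.prems unfolding is_tree_def connected_graph_def by blast
  show ?case
  proof (cases "E = {}")
    case True
    have "card V \<le> 1"
    proof (rule ccontr)
      assume "\<not> card V \<le> 1"
      then obtain a b where "a \<in> V" "b \<in> V" "a \<noteq> b"
        by (metis One_nat_def card_le_Suc0_iff_eq finV not_le)
      thus False using conn_ne_edge[OF less.prems] True by blast
    qed
    thus ?thesis using True by simp
  next
    case False
    have ac: "acyclic_graph E" using less.prems is_tree_def by blast
    obtain u v where uv: "{u,v} \<in> E" "u \<noteq> v" "\<forall>e\<in>E. v \<in> e \<longrightarrow> e = {u,v}"
      using leaf_exists[OF sg ac False] by blast
    have vV: "v \<in> V" using sg_edge[OF sg uv(1)] by auto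
    have T': "is_tree (V - {v}) (E - {{u,v}})" using tree_remove_leaf[OF less.prems uv] .
    have "card (V - {v}) < card V" using finV vV by (meson card_Diff1_less)
    from less.hyps[OF this T'] have "card (E - {{u,v}}) = card (V - {v}) - 1" .
    moreover have "card (E - {{u,v}}) = card E - 1" using finE uv(1) by simp
    moreover have "card (V - {v}) = card V - 1" using finV vV by simp
    moreover have "card E \<ge> 1" using finE uv(1) card_gt_0_iff[of E] by auto
    moreover have "card (V - {v}) \<ge> 1" using uv(2) sg_edge[OF sg uv(1)] finV card_gt_0_iff[of "V - {v}"] by auto
    ultimately show ?thesis by arith
  qed
qed

lemma handshake:
  assumes sg: "simple_graph V E"
  shows "sum (degree E) V = 2 * card E"
proof -
  have finV: "finite V" using sg simple_graph_def by blast
  have finE: "finite E" using sg_finE[OF sg] .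
  have "sum (degree E) V = (\<Sum>v\<in>V. \<Sum>e\<in>E. if v \<in> e then 1 else 0)"
  proof (rule sum.cong[OF refl])
    fix v
    have "degree E v = sum (\<lambda>_. 1) {e\<in>E. v \<in> e}" unfolding degree_def by (rule card_eq_sum)
    also have "\<dots> = (\<Sum>e\<in>E. if v \<in> e then 1 else 0)" by (rule sum.inter_filter[OF finE])
    finally show "degree E v = (\<Sum>e\<in>E. if v \<in> e then 1 else 0)" .
  qed
  also have "\<dots> = (\<Sum>e\<in>E. \<Sum>v\<in>V. if v \<in> e then 1 else 0)" by (rule sum.swap)
  also have "\<dots> = (\<Sum>e\<in>E. 2)"
  proof (rule sum.cong[OF refl])
    fix e assume e: "e \<in> E"
    obtain a b where ab: "e = {a,b}" "a \<noteq> b" "a \<in> V" "b \<in> V" using sg_edge2[OF sg e] by blast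
    have "(\<Sum>v\<in>V. if v \<in> e then 1 else 0) = sum (\<lambda>_. 1) {v\<in>V. v \<in> e}"
      by (rule sum.inter_filter[OF finV, symmetric])
    also have "{v\<in>V. v \<in> e} = e" using ab by auto
    also have "sum (\<lambda>_. 1) e = card e" by (rule card_eq_sum[symmetric])
    finally show "(\<Sum>v\<in>V. if v \<in> e then 1 else 0) = (2::nat)" using ab by simp
  qed
  finally show ?thesis by simp
qed

lemma tree_deg_pos:
  assumes T: "is_tree V E" and v: "v \<in> V" and n2: "card V \<ge> 2"
  shows "degree E v \<ge> 1"
proof -
  have finV: "finite V" using T unfolding is_tree_def simple_graph_def by blast
  have finE: "finite E" using T sg_finE unfolding is_tree_def by blast
  have "card (V - {v}) \<ge> 1" using n2 v finV by simp
  then obtain b where b: "b \<in> V" "b \<noteq> v"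
    by (metis Diff_iff card.empty ex_in_conv insertCI not_one_le_zero)
  obtain y where "{v,y} \<in> E" using conn_ne_edge[OF T v b] by blast
  then have "{v,y} \<in> {e\<in>E. v \<in> e}" by simp
  moreover have "finite {e\<in>E. v \<in> e}" using finE by simp
  ultimately have "card {e\<in>E. v \<in> e} > 0" using card_gt_0_iff by blast
  thus ?thesis unfolding degree_def by simp
qed

lemma no_leaf_edge:
  assumes T: "is_tree V E" and n3: "card V \<ge> 3" and ab: "{a,b} \<in> E" "a \<noteq> b"
    and da: "degree E a = 1" and db: "degree E b = 1"
  shows False
proof -
  have sg: "simple_graph V E" using T is_tree_def by blast
  have finV: "finite V" using sg simple_graph_def by blast
  have aV: "a \<in> V" "b \<in> V" using sg_edge[OF sg ab(1)] by auto
  have Sa: "{e\<in>E. a \<in> e} = {{a,b}}"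
  proof -
    obtain x where x: "{e\<in>E. a \<in> e} = {x}" using da unfolding degree_def by (metis card_1_singletonE)
    have "{a,b} \<in> {e\<in>E. a \<in> e}" using ab by simp
    thus ?thesis using x by simp
  qed
  have Sb: "{e\<in>E. b \<in> e} = {{a,b}}"
  proof -
    obtain x where x: "{e\<in>E. b \<in> e} = {x}" using db unfolding degree_def by (metis card_1_singletonE)
    have "{a,b} \<in> {e\<in>E. b \<in> e}" using ab by simp
    thus ?thesis using x by simp
  qed
  have closed: "(adj E)\<^sup>*\<^sup>* a z \<Longrightarrow> z \<in> {a,b}" for z
  proof (induction rule: rtranclp_induct)
    case base thus ?case by simp
  next
    case (step y z)
    have yz: "{y,z} \<in> E" "y \<noteq> z" using step.hyps(2) unfolding adj_def by auto
    show ?case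
    proof (cases "y = a")
      case True
      then have "{y,z} \<in> {e\<in>E. a \<in> e}" using yz by simp
      then have "{y,z} = {a,b}" using Sa by simp
      thus ?thesis by (auto simp: doubleton_eq_iff)
    next
      case False
      then have "y = b" using step.IH by simp
      then have "{y,z} \<in> {e\<in>E. b \<in> e}" using yz by simp
      then have "{y,z} = {a,b}" using Sb by simp
      thus ?thesis by (auto simp: doubleton_eq_iff)
    qed
  qed
  have "card (V - {a,b}) \<ge> 1" using n3 aV finV ab(2) by (simp add: card_Diff_subset)
  then obtain z where z: "z \<in> V" "z \<notin> {a,b}"
    by (metis Diff_iff card.empty ex_in_conv not_one_le_zero)
  have "(adj E)\<^sup>*\<^sup>* a z" using T aV z unfolding is_tree_def connected_graph_def by blast
  thus False using closed z by blast
qed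

lemma matching_half:
  assumes sg: "simple_graph V E" and M: "is_matching E M"
  shows "2 * card M \<le> card V"
proof -
  have finV: "finite V" using sg simple_graph_def by blast
  have MsubE: "M \<subseteq> E" using M is_matching_def by blast
  have finM: "finite M" using finite_subset[OF MsubE sg_finE[OF sg]] .
  have c2: "e \<in> M \<Longrightarrow> card e = 2" for e
    using sg_edge2[OF sg] MsubE by fastforce
  have pw: "pairwise disjnt M" using M unfolding is_matching_def pairwise_def disjnt_def by blast
  have fe: "\<And>A. A \<in> M \<Longrightarrow> finite A" using c2 card.infinite by fastforce
  have "card (\<Union>M) = sum card M" using card_Union_disjoint[OF pw fe] .
  also have "\<dots> = sum (\<lambda>_. 2) M" using c2 by (intro sum.cong) auto
  also have "\<dots> = 2 * card M" by simp
  finally have "card (\<Union>M) = 2 * card M" .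
  moreover have "\<Union>M \<subseteq> V" using MsubE sg_edge[OF sg] by blast
  ultimately show ?thesis using card_mono[OF finV] by metis
qed

lemma matching_nonleaf:
  assumes T: "is_tree V E" and n3: "card V \<ge> 3" and M: "is_matching E M"
  shows "card M \<le> card V - card {v\<in>V. degree E v = 1}"
proof -
  have sg: "simple_graph V E" using T is_tree_def by blast
  have finV: "finite V" using sg simple_graph_def by blast
  let ?C = "{v\<in>V. degree E v \<noteq> 1}"
  have cov: "\<forall>e\<in>E. \<exists>c\<in>?C. c \<in> e"
  proof
    fix e assume e: "e \<in> E"
    obtain a b where ab: "e = {a,b}" "a \<noteq> b" "a \<in> V" "b \<in> V" using sg_edge2[OF sg e] by blast
    have "degree E a \<noteq> 1 \<or> degree E b \<noteq> 1" using no_leaf_edge[OF T n3, of a b] ab e by blast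
    thus "\<exists>c\<in>?C. c \<in> e" using ab by auto
  qed
  have "card M \<le> card ?C" using matching_le_cover[OF M _ cov] finV by simp
  moreover have "?C = V - {v\<in>V. degree E v = 1}" by auto
  moreover have "card (V - {v\<in>V. degree E v = 1}) = card V - card {v\<in>V. degree E v = 1}"
    using finV by (intro card_Diff_subset) auto
  ultimately show ?thesis by simp
qed

lemma take_sum_step:
  fixes d :: "nat list"
  assumes "\<forall>x\<in>set d. x \<le> a"
  shows "sum_list (take (Suc k) d) \<le> a + sum_list (take k d)"
proof (cases "k < length d")
  case True
  have "take (Suc k) d = take k d @ [d!k]" using take_Suc_conv_app_nth[OF True] .
  moreover have "d!k \<le> a" using assms True nth_mem by blast
  ultimately show ?thesis by simp
next
  case False
  then have "take (Suc k) d = take k d" by simp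
  thus ?thesis by simp
qed

lemma notin_subset:
  assumes a: "a \<notin># A" and s: "A \<subseteq># add_mset a B"
  shows "A \<subseteq># B"
  unfolding subseteq_mset_def
proof
  fix x
  have h: "count A x \<le> count (add_mset a B) x" using s[unfolded subseteq_mset_def] by (rule spec)
  show "count A x \<le> count B x"
  proof (cases "x = a")
    case True thus ?thesis using a by (simp add: not_in_iff)
  next
    case False thus ?thesis using h by simp
  qed
qed

lemma topsum:
  fixes d :: "nat list"
  assumes "sorted_wrt (\<ge>) d" "A \<subseteq># mset d"
  shows "sum_mset A \<le> sum_list (take (size A) d)"
  using assms
proof (induction d arbitrary: A)
  case Nil thus ?case by simp
next
  case (Cons a d)
  have sd: "sorted_wrt (\<ge>) d" and ad: "\<forall>x\<in>set d. x \<le> a" using Cons.prems(1) by auto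
  show ?case
  proof (cases "a \<in># A")
    case True
    define A' where "A' = A - {#a#}"
    have AA: "A = add_mset a A'" using True A'_def by simp
    have "A' \<subseteq># mset d" using Cons.prems(2) AA mset_subset_eq_add_mset_cancel by simp
    from Cons.IH[OF sd this] have "sum_mset A' \<le> sum_list (take (size A') d)" .
    thus ?thesis using AA by simp
  next
    case False
    have "A \<subseteq># mset d" using notin_subset[OF False] Cons.prems(2) by simp
    from Cons.IH[OF sd this] have ih: "sum_mset A \<le> sum_list (take (size A) d)" .
    show ?thesis
    proof (cases "size A")
      case 0 thus ?thesis using ih by simp
    next
      case (Suc k)
      have "sum_list (take (Suc k) d) \<le> a + sum_list (take k d)" using take_sum_step[OF ad] .
      thus ?thesis using ih Suc by simp
    qed
  qed
qed

lemma take_sum_mono: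
  fixes d :: "nat list"
  assumes "k \<le> k'"
  shows "sum_list (take k d) \<le> sum_list (take k' d)"
proof -
  have "take k (take k' d) = take k d" using assms by (simp add: min_def)
  moreover have "sum_list (take k' d) = sum_list (take k (take k' d)) + sum_list (drop k (take k' d))"
    by (metis append_take_drop_id sum_list_append)
  ultimately show ?thesis by simp
qed

lemma ds_facts:
  fixes E :: "nat set set" and n :: nat
  defines "d \<equiv> degree_sequence n E"
  shows "length d = n" "mset d = mset (map (degree E) [0..<n])" "sorted_wrt (\<ge>) d"
    "sum_list d = sum (degree E) {0..<n}" "n1 d = card {v\<in>{0..<n}. degree E v = 1}"
proof -
  show "length d = n" unfolding d_def degree_sequence_def by simp
  show m: "mset d = mset (map (degree E) [0..<n])" unfolding d_def degree_sequence_def by simp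
  show "sorted_wrt (\<ge>) d" unfolding d_def degree_sequence_def by (simp add: sorted_wrt_rev)
  have "sum_list d = sum_mset (mset d)" by (simp add: sum_mset_sum_list)
  also have "\<dots> = sum_list (map (degree E) [0..<n])" by (simp only: m sum_mset_sum_list)
  also have "\<dots> = sum (degree E) {0..<n}" by (simp add: sum_set_upt_conv_sum_list_nat[symmetric])
  finally show "sum_list d = sum (degree E) {0..<n}" .
  have "n1 d = size (filter_mset (\<lambda>x. x = 1) (mset d))" unfolding n1_def by (metis mset_filter size_mset)
  also have "\<dots> = length (filter (\<lambda>x. x = 1) (map (degree E) [0..<n]))" using m by (metis mset_filter size_mset)
  also have "\<dots> = card {i. i < n \<and> map (degree E) [0..<n] ! i = 1}" by (simp add: length_filter_conv_card)
  also have "{i. i < n \<and> map (degree E) [0..<n] ! i = 1} = {i. i < n \<and> degree E i = 1}" by auto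
  also have "{i. i < n \<and> degree E i = 1} = {v\<in>{0..<n}. degree E v = 1}" by auto
  finally show "n1 d = card {v\<in>{0..<n}. degree E v = 1}" .
qed

lemma matchings_finite:
  assumes sg: "simple_graph V E"
  shows "finite {card M | M. is_matching E M}" "0 \<in> {card M | M. is_matching E M}"
proof -
  have "{card M | M. is_matching E M} \<subseteq> card ` Pow E" unfolding is_matching_def by auto
  thus "finite {card M | M. is_matching E M}" using sg_finE[OF sg] finite_subset by blast
  have "is_matching E {}" unfolding is_matching_def by simp
  thus "0 \<in> {card M | M. is_matching E M}" by force
qed

lemma forward:
  fixes E :: "nat set set"
  assumes T: "is_tree {0..<n} E" and n3: "n \<ge> 3"
  defines "d \<equiv> degree_sequence n E"
  shows "(LEAST k. sum_list (take k d) \<ge> n - 1) \<le> matching_number E \<and>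
         matching_number E \<le> min (n div 2) (n - n1 d)"
proof -
  let ?V = "{0..<n::nat}"
  have sg: "simple_graph ?V E" and ac: "acyclic_graph E" using T is_tree_def by auto
  have finE: "finite E" using sg_finE[OF sg] .
  let ?S = "{card M | M. is_matching E M}"
  note fs = matchings_finite[OF sg]
  define nu where "nu = matching_number E"
  have "nu \<in> ?S" unfolding nu_def matching_number_def using fs Max_in by blast
  then obtain M0 where M0: "is_matching E M0" "card M0 = nu" by blast
  have ge: "is_matching E M \<Longrightarrow> card M \<le> nu" for M
    unfolding nu_def matching_number_def using fs by (intro Max_ge) auto
  obtain M C where MC: "is_matching E M" "C \<subseteq> ?V" "\<forall>e\<in>E. \<exists>c\<in>C. c\<in>e" "card C \<le> card M"
    using konig_forest[OF sg ac] by blast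
  have Cnu: "card C \<le> nu" using MC(4) ge[OF MC(1)] by simp
  have finC: "finite C" using MC(2) finite_subset by blast
  have cE: "card E = n - 1" using tree_edges[OF T] by simp
  have "card E \<le> (\<Sum>c\<in>C. degree E c)"
  proof -
    have "E \<subseteq> (\<Union>c\<in>C. {e\<in>E. c\<in>e})" using MC(3) by blast
    moreover have "finite (\<Union>c\<in>C. {e\<in>E. c\<in>e})" using finE finC by auto
    ultimately have "card E \<le> card (\<Union>c\<in>C. {e\<in>E. c\<in>e})" by (rule card_mono[rotated])
    also have "\<dots> \<le> (\<Sum>c\<in>C. card {e\<in>E. c\<in>e})" by (rule card_UN_le[OF finC])
    finally show ?thesis unfolding degree_def .
  qed
  moreover have "(\<Sum>c\<in>C. degree E c) \<le> sum_list (take (card C) d)"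
  proof -
    define A where "A = image_mset (degree E) (mset_set C)"
    have "mset_set ?V = mset_set C + mset_set (?V - C)"
      using mset_set_Union[of C "?V - C"] finC MC(2) by (metis Diff_disjoint Un_Diff_cancel2 finite_Diff finite_atLeastLessThan sup.absorb_iff2 Un_commute)
    then have "mset_set C \<subseteq># mset_set ?V" by simp
    then have "A \<subseteq># image_mset (degree E) (mset_set ?V)" unfolding A_def by (rule image_mset_subseteq_mono)
    also have "image_mset (degree E) (mset_set ?V) = mset d" using ds_facts(2)[of n E] d_def by simp
    finally have Ad: "A \<subseteq># mset d" .
    have "sum_mset A \<le> sum_list (take (size A) d)" using topsum[OF ds_facts(3)[of n E, folded d_def] Ad] .
    moreover have "sum_mset A = (\<Sum>c\<in>C. degree E c)" unfolding A_def by (simp add: sum_unfold_sum_mset)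
    moreover have "size A = card C" unfolding A_def by simp
    ultimately show ?thesis by simp
  qed
  moreover have "sum_list (take (card C) d) \<le> sum_list (take nu d)" using take_sum_mono[OF Cnu] .
  ultimately have "sum_list (take nu d) \<ge> n - 1" using cE by linarith
  then have low: "(LEAST k. sum_list (take k d) \<ge> n - 1) \<le> nu" by (rule Least_le)
  have h1: "2 * nu \<le> n" using matching_half[OF sg M0(1)] M0(2) by simp
  have h2: "nu \<le> n - n1 d" using matching_nonleaf[OF T _ M0(1)] n3 M0(2) ds_facts(5)[of n E] d_def by simp
  show ?thesis using low h1 h2 nu_def by simp
qed

lemma backward:
  fixes d :: "nat list"
  assumes tds: "tree_degree_sequence d" and n3: "length d \<ge> 3"
    and lo: "(LEAST k. sum_list (take k d) \<ge> length d - 1) \<le> m"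
    and hi: "m \<le> min (length d div 2) (length d - n1 d)"
  shows "\<exists>E. is_tree {0..<length d} E \<and> degree_sequence (length d) E = d \<and> matching_number E = m"
proof -
  define n where "n = length d"
  obtain E0 where E0: "is_tree {0..<n} E0" "degree_sequence n E0 = d"
    using tds unfolding tree_degree_sequence_def n_def by blast
  have sg0: "simple_graph {0..<n} E0" using E0 is_tree_def by blast
  have msd: "mset d = mset (map (degree E0) [0..<n])" using ds_facts(2)[of n E0] E0(2) by simp
  have srt: "sorted_wrt (\<ge>) d" using ds_facts(3)[of n E0] E0(2) by simp
  have sumd: "sum_list d = 2 * n - 2"
  proof -
    have "sum_list d = sum (degree E0) {0..<n}" using ds_facts(4)[of n E0] E0(2) by simp
    also have "\<dots> = 2 * card E0" using handshake[OF sg0] .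
    also have "card E0 = n - 1" using tree_edges[OF E0(1)] by simp
    finally show ?thesis by simp
  qed
  have pos: "\<forall>i<n. d!i \<ge> 1"
  proof (intro allI impI)
    fix i assume i: "i < n"
    have "d!i \<in> set d" using i n_def by simp
    then have "d!i \<in> set (map (degree E0) [0..<n])" using msd mset_eq_setD by blast
    then obtain j where j: "j < n" "d!i = degree E0 j" by auto
    show "d!i \<ge> 1" using tree_deg_pos[OF E0(1), of j] j n3 n_def by simp
  qed
  have ex: "sum_list (take n d) \<ge> n - 1" using sumd n_def by simp
  have "sum_list (take (LEAST k. sum_list (take k d) \<ge> n - 1) d) \<ge> n - 1"
    by (rule LeastI[of "\<lambda>k. sum_list (take k d) \<ge> n - 1", OF ex])
  then have sm: "sum_list (take m d) \<ge> n - 1"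
    using take_sum_mono[of "LEAST k. sum_list (take k d) \<ge> n - 1" m d] lo n_def by simp
  have m1: "m \<ge> 1"
  proof (rule ccontr)
    assume "\<not> m \<ge> 1" then have "m = 0" by simp
    thus False using sm n3 n_def by simp
  qed
  have mn: "m \<le> n" "2 * m \<le> n" "m \<le> n - n1 d" using hi n_def by auto
  have big: "\<forall>s\<in>{0..<m}. d!s \<ge> 2"
  proof
    fix i assume "i \<in> {0..<m}"
    then have i: "i < m" by simp
    show "d!i \<ge> 2"
    proof (rule ccontr)
      assume "\<not> d!i \<ge> 2"
      moreover have "d!i \<ge> 1" using pos i mn by simp
      ultimately have di: "d!i = 1" by linarith
      have "\<forall>j\<in>{i..<n}. d!j = 1"
      proof
        fix j assume j: "j \<in> {i..<n}"
        have "d!j \<le> d!i"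
        proof (cases "j = i")
          case True thus ?thesis by simp
        next
          case False
          then have "i < j" using j by simp
          thus ?thesis using sorted_wrt_nth_less[OF srt, of i j] j n_def by simp
        qed
        moreover have "d!j \<ge> 1" using pos j by simp
        ultimately show "d!j = 1" using di by linarith
      qed
      then have "{i..<n} \<subseteq> {j. j < length d \<and> d!j = 1}" using n_def by auto
      then have "card {i..<n} \<le> card {j. j < length d \<and> d!j = 1}" by (intro card_mono) auto
      also have "\<dots> = n1 d" unfolding n1_def by (simp add: length_filter_conv_card)
      finally have "n - i \<le> n1 d" by simp
      thus False using mn i by linarith
    qed
  qed
  have fV: "sum (\<lambda>i. d!i) {0..<n} = 2 * card {0..<n} - 2" using sumd sum_list_sum_nth[of d] n_def by simp
  have fS: "sum (\<lambda>i. d!i) {0..<m} \<ge> card {0..<n} - 1"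
  proof -
    have "sum_list (take m d) = (\<Sum>i = 0..<m. (take m d)!i)" using sum_list_sum_nth[of "take m d"] mn n_def by simp
    also have "\<dots> = (\<Sum>i = 0..<m. d!i)" by (intro sum.cong) auto
    finally show ?thesis using sm by simp
  qed
  obtain E M C where EMC: "is_tree {0..<n} E" "\<forall>v\<in>{0..<n}. degree E v = d!v" "is_matching E M"
    "C \<subseteq> {0..<n}" "\<forall>e\<in>E. \<exists>c\<in>C. c\<in>e" "card M = m" "card C = m"
    using construct[of "{0..<n}" "\<lambda>i. d!i" "{0..<m}" m] n3 n_def pos fV mn m1 fS big by auto
  have "map (degree E) [0..<n] = map (\<lambda>i. d!i) [0..<n]" using EMC(2) by simp
  also have "\<dots> = d" using map_nth n_def by simp
  finally have mp: "map (degree E) [0..<n] = d" .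
  have "sort d = rev d"
    by (rule properties_for_sort) (use srt in \<open>simp_all add: sorted_wrt_rev\<close>)
  then have dsq: "degree_sequence n E = d" unfolding degree_sequence_def mp by simp
  have sg: "simple_graph {0..<n} E" using EMC(1) is_tree_def by blast
  note fs = matchings_finite[OF sg]
  have "matching_number E = m" unfolding matching_number_def
  proof (rule Max_eqI[OF fs(1)])
    fix y assume "y \<in> {card M | M. is_matching E M}"
    then obtain M' where M': "is_matching E M'" "y = card M'" by blast
    have "finite C" using EMC(4) finite_subset by blast
    from matching_le_cover[OF M'(1) this EMC(5)] show "y \<le> m" using M' EMC(7) by simp
  next
    show "m \<in> {card M | M. is_matching E M}" using EMC(3,6) by blast
  qed
  thus ?thesis using EMC(1) dsq unfolding n_def by blast
qed

theorem theorem1: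
  fixes d :: "nat list" and \<nu> :: int
  assumes "tree_degree_sequence d"
    and "length d \<ge> 3"
  shows "(\<exists>E. is_tree {0..<length d} E \<and> degree_sequence (length d) E = d
              \<and> int (matching_number E) = \<nu>)
     \<longleftrightarrow> int (LEAST k. sum_list (take k d) \<ge> length d - 1) \<le> \<nu>
         \<and> \<nu> \<le> int (min (length d div 2) (length d - n1 d))"
proof
  assume "\<exists>E. is_tree {0..<length d} E \<and> degree_sequence (length d) E = d \<and> int (matching_number E) = \<nu>"
  then obtain E where E: "is_tree {0..<length d} E" "degree_sequence (length d) E = d" "int (matching_number E) = \<nu>"
    by blast
  from forward[OF E(1) assms(2)] E(2)
  have "(LEAST k. sum_list (take k d) \<ge> length d - 1) \<le> matching_number E \<and>
         matching_number E \<le> min (length d div 2) (length d - n1 d)" by simp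
  thus "int (LEAST k. sum_list (take k d) \<ge> length d - 1) \<le> \<nu>
         \<and> \<nu> \<le> int (min (length d div 2) (length d - n1 d))" using E(3) by linarith
next
  assume h: "int (LEAST k. sum_list (take k d) \<ge> length d - 1) \<le> \<nu>
         \<and> \<nu> \<le> int (min (length d div 2) (length d - n1 d))"
  define m where "m = nat \<nu>"
  have nu: "\<nu> = int m" using h m_def by simp
  have lo: "(LEAST k. sum_list (take k d) \<ge> length d - 1) \<le> m" using h nu by simp
  have hi: "m \<le> min (length d div 2) (length d - n1 d)" using h nu by simp
  obtain E where "is_tree {0..<length d} E" "degree_sequence (length d) E = d" "matching_number E = m"
    using backward[OF assms lo hi] by blast
  thus "\<exists>E. is_tree {0..<length d} E \<and> degree_sequence (length d) E = d \<and> int (matching_number E) = \<nu>"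
    using nu by blast
qed

end
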